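(* For all integers $n\ge1$ and $r\ge1$: (a) $\displaystyle\sum_{k=1}^{n}\bigl(2^{\tau(k)}-1\bigr)\omega(n-k)=\sum_{\substack{m+k=n\\ m\ge1,\ k\ge0}}\Phi^\tau(m)\,\Omega_m(k)$; (b) $\displaystyle\sum_{k=1}^{n}\binom{\tau(k)}{r}\omega(n-k)=\sum_{\substack{m+k=n\\ m\ge1,\ k\ge0}}\Phi^\tau_r(m)\,\Omega_m(k)$.
   Context: $\tau(n)$ is the number of positive divisors of $n$. $\Phi^\tau(n)$ is the number of nonempty subsets $S$ of the set of positive divisors of $n$ such that $\gcd(\gcd(S),n)=1$, and $\Phi^\tau_r(n)$ is the number of such subsets of cardinality $r$. $\omega:\mathbb{Z}\to\mathbb{Z}$ is defined by $\omega(0)=1$; $\omega(m)=(-1)^j$ if $m=\frac{3j^2\pm j}{2}$ for some integer $j\ge1$; $\omega(m)=0$ otherwise (in particular for $m<0$). For $m\ge1$ and integer $k$, $\Omega_m(k)=\sum_{j\ge0}\omega(k-jm)=\omega(k)+\omega(k-m)+\omega(k-2m)+\cdots$. *)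

theory Defs
  imports Main
begin

definition divisors_set :: "nat \<Rightarrow> nat set" where
  "divisors_set n = {d. d dvd n}"

definition tau :: "nat \<Rightarrow> nat" where
  "tau n = card (divisors_set n)"

definition Phi_tau :: "nat \<Rightarrow> nat" where
  "Phi_tau n = card {S. S \<subseteq> divisors_set n \<and> S \<noteq> {} \<and> gcd (Gcd S) n = 1}"

definition Phi_tau_r :: "nat \<Rightarrow> nat \<Rightarrow> nat" where
  "Phi_tau_r r n = card {S. S \<subseteq> divisors_set n \<and> S \<noteq> {} \<and> gcd (Gcd S) n = 1 \<and> card S = r}"

definition pent_omega :: "int \<Rightarrow> int" where
  "pent_omega m =
     (if m = 0 then 1
      else if (\<exists>j::nat. j \<ge> 1 \<and> (2 * m = 3 * int j ^ 2 + int j \<or> 2 * m = 3 * int j ^ 2 - int j))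
      then (-1) ^ (THE j::nat. j \<ge> 1 \<and> (2 * m = 3 * int j ^ 2 + int j \<or> 2 * m = 3 * int j ^ 2 - int j))
      else 0)"

text \<open>Omega_m(k) = sum_{j>=0} omega(k - j m). For m >= 1 all terms with j > k vanish
  (their argument is negative), so the sum is taken over j = 0..nat k.\<close>
definition Omega :: "nat \<Rightarrow> int \<Rightarrow> int" where
  "Omega m k = (\<Sum>j = 0..nat k. pent_omega (k - int j * int m))"

end

theory Submission
  imports Defs
begin


definition EE :: "(nat \<Rightarrow> bool) \<Rightarrow> nat \<Rightarrow> nat set set" where
  "EE P m = {T. T \<subseteq> divisors_set m \<and> T \<noteq> {} \<and> gcd (Gcd T) m = 1 \<and> P (card T)}"
definition DD :: "(nat \<Rightarrow> bool) \<Rightarrow> nat \<Rightarrow> nat set set" where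
  "DD P k = {S. S \<subseteq> divisors_set k \<and> S \<noteq> {} \<and> P (card S)}"

lemma mem_EE: "T \<in> EE P m \<longleftrightarrow> T \<subseteq> divisors_set m \<and> T \<noteq> {} \<and> gcd (Gcd T) m = 1 \<and> P (card T)"
  unfolding EE_def by (rule mem_Collect_eq)
lemma mem_DD: "T \<in> DD P m \<longleftrightarrow> T \<subseteq> divisors_set m \<and> T \<noteq> {} \<and> P (card T)"
  unfolding DD_def by (rule mem_Collect_eq)
lemma mem_div: "x \<in> divisors_set m \<longleftrightarrow> x dvd m"
  unfolding divisors_set_def by (rule mem_Collect_eq)

lemma fin_div: "k > 0 \<Longrightarrow> finite (divisors_set k)"
  unfolding divisors_set_def
  by (rule finite_subset[of _ "{..k}"]) (auto dest: dvd_imp_le)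

lemma gcd_Gcd_sub: "T \<subseteq> divisors_set m \<Longrightarrow> T \<noteq> {} \<Longrightarrow> gcd (Gcd T) m = Gcd T"
proof -
  assume a: "T \<subseteq> divisors_set m" "T \<noteq> {}"
  then obtain t where t: "t \<in> T" by auto
  then have "t dvd m" using a(1) mem_div by blast
  then have "Gcd T dvd m" using t by (meson Gcd_dvd dvd_trans)
  then show ?thesis by (rule gcd_nat.absorb1)
qed

lemma slice1:
  assumes k: "k > 0" and g: "g dvd k" and S: "S \<in> DD P k" "Gcd S = g"
  shows "S \<in> ((`) ((*) g)) ` EE P (k div g)"
proof -
  have g0: "g > 0" using g k by (auto intro: Nat.gr0I)
  have S: "S \<subseteq> divisors_set k" "S \<noteq> {}" "P (card S)" "Gcd S = g"
    using S mem_DD by blast+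
  define T where "T = (\<lambda>x. x div g) ` S"
  have gx: "\<And>x. x \<in> S \<Longrightarrow> g dvd x" using S(4) Gcd_dvd by blast
  have "(*) g ` T = (\<lambda>x. g * (x div g)) ` S" unfolding T_def image_image ..
  also have "\<dots> = (\<lambda>x. x) ` S" by (rule image_cong) (use gx in auto)
  finally have ST: "S = (*) g ` T" by simp
  have inj: "inj_on ((*) g) T" using g0 by (auto simp: inj_on_def)
  have cT: "card T = card S" using ST inj by (simp add: card_image)
  have "g * Gcd T = g" using S(4) ST by (simp add: Gcd_mult)
  then have G1: "Gcd T = 1" using g0 by simp
  have Tsub: "T \<subseteq> divisors_set (k div g)"
  proof
    fix y assume "y \<in> T"
    then obtain x where x: "x \<in> S" "y = x div g" unfolding T_def by blast
    have "x dvd k" using x(1) S(1) mem_div by blast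
    then have "x div g dvd k div g" using gx[OF x(1)] g by (rule div_dvd_div[THEN iffD2, rotated -1])
    then show "y \<in> divisors_set (k div g)" using x(2) mem_div by simp
  qed
  have Tne: "T \<noteq> {}" using S(2) T_def by blast
  have "gcd (Gcd T) (k div g) = 1" using gcd_Gcd_sub[OF Tsub Tne] G1 by simp
  then have "T \<in> EE P (k div g)" using mem_EE Tsub Tne cT S(3) by simp
  then show ?thesis using ST by blast
qed

lemma slice2:
  assumes k: "k > 0" and g: "g dvd k" and T: "T \<in> EE P (k div g)"
  shows "(*) g ` T \<in> DD P k \<and> Gcd ((*) g ` T) = g"
proof -
  have g0: "g > 0" using g k by (auto intro: Nat.gr0I)
  have Tp: "T \<subseteq> divisors_set (k div g)" "T \<noteq> {}" "gcd (Gcd T) (k div g) = 1" "P (card T)"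
    using T mem_EE by blast+
  have G1: "Gcd T = 1" using gcd_Gcd_sub[OF Tp(1,2)] Tp(3) by simp
  have inj: "inj_on ((*) g) T" using g0 by (auto simp: inj_on_def)
  have sub: "(*) g ` T \<subseteq> divisors_set k"
  proof
    fix y assume "y \<in> (*) g ` T"
    then obtain t where t: "t \<in> T" "y = g * t" by blast
    have "t dvd k div g" using t(1) Tp(1) mem_div by blast
    then have "g * t dvd g * (k div g)" by (rule mult_dvd_mono[OF dvd_refl])
    also have "g * (k div g) = k" using g by simp
    finally show "y \<in> divisors_set k" using t(2) mem_div by simp
  qed
  have "Gcd ((*) g ` T) = g" using G1 by (simp add: Gcd_mult)
  moreover have "card ((*) g ` T) = card T" using inj by (simp add: card_image)
  moreover have "(*) g ` T \<noteq> {}" using Tp(2) by blast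
  ultimately show ?thesis using sub Tp(4) mem_DD by simp
qed

lemma slice:
  assumes k: "k > 0" and g: "g dvd k"
  shows "{S\<in>DD P k. Gcd S = g} = ((`) ((*) g)) ` EE P (k div g)"
  using slice1[OF k g] slice2[OF k g] by blast

lemma inj_img: "(g::nat) > 0 \<Longrightarrow> inj_on ((`) ((*) g)) X"
proof (rule inj_onI)
  fix A B assume g: "g > 0" and e: "(*) g ` A = (*) g ` B"
  have "inj ((*) g)" using g by (auto simp: inj_on_def)
  then show "A = B" using e by (simp add: inj_image_eq_iff)
qed



lemma decomp:
  assumes k: "k > 0"
  shows "card (DD P k) = (\<Sum>m\<in>divisors_set k. card (EE P m))"
proof -
  have fin: "finite (divisors_set k)" using fin_div k .
  have finD: "finite (DD P k)"
    by (rule finite_subset[of _ "Pow (divisors_set k)"]) (use fin mem_DD in auto)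
  have U: "DD P k = (\<Union>g\<in>divisors_set k. {S\<in>DD P k. Gcd S = g})"
  proof (intro equalityI subsetI)
    fix S assume S: "S \<in> DD P k"
    then have S': "S \<subseteq> divisors_set k" "S \<noteq> {}" using mem_DD by blast+
    then obtain t where t: "t \<in> S" by blast
    then have "t dvd k" using S' mem_div by blast
    then have "Gcd S dvd k" using t by (meson Gcd_dvd dvd_trans)
    then show "S \<in> (\<Union>g\<in>divisors_set k. {S\<in>DD P k. Gcd S = g})"
      using S mem_div by blast
  qed blast
  have "card (\<Union>g\<in>divisors_set k. {S\<in>DD P k. Gcd S = g}) = (\<Sum>g\<in>divisors_set k. card {S\<in>DD P k. Gcd S = g})"
    by (rule card_UN_disjoint) (use fin finD in auto)
  then have "card (DD P k) = (\<Sum>g\<in>divisors_set k. card {S\<in>DD P k. Gcd S = g})"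
    using U by metis
  also have "\<dots> = (\<Sum>g\<in>divisors_set k. card (EE P (k div g)))"
  proof (rule sum.cong[OF refl])
    fix g assume g: "g \<in> divisors_set k"
    then have gd: "g dvd k" using mem_div by blast
    have g0: "g > 0" using gd k by (auto intro: Nat.gr0I)
    show "card {S\<in>DD P k. Gcd S = g} = card (EE P (k div g))"
      unfolding slice[OF k gd] using inj_img[OF g0] by (rule card_image)
  qed
  also have "\<dots> = (\<Sum>m\<in>divisors_set k. card (EE P m))"
  proof (rule sum.reindex_bij_witness[of _ "\<lambda>m. k div m" "\<lambda>m. k div m"])
    fix a assume "a \<in> divisors_set k"
    then have a: "a dvd k" using mem_div by blast
    then have a0: "a > 0" using k by (auto intro: Nat.gr0I)
    show "k div (k div a) = a" using k by (simp add: div_div_eq_right[OF a dvd_refl])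
    have "k div a dvd k" using dvd_triv_left[of "k div a" a] dvd_div_mult_self[OF a] by simp
    then show "k div a \<in> divisors_set k" using mem_div by blast
  next
    fix a assume "a \<in> divisors_set k"
    then have a: "a dvd k" using mem_div by blast
    then have a0: "a > 0" using k by (auto intro: Nat.gr0I)
    show "k div (k div a) = a" using k by (simp add: div_div_eq_right[OF a dvd_refl])
    have "k div a dvd k" using dvd_triv_left[of "k div a" a] dvd_div_mult_self[OF a] by simp
    then show "k div a \<in> divisors_set k" using mem_div by blast
  qed simp
  finally show ?thesis .
qed



lemma count_all:
  assumes k: "k > 0"
  shows "2 ^ tau k - 1 = (\<Sum>m\<in>divisors_set k. Phi_tau m)"
proof -
  have fin: "finite (divisors_set k)" using fin_div k .
  have "DD (\<lambda>_. True) k = Pow (divisors_set k) - {{}}" unfolding DD_def by blast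
  then have "card (DD (\<lambda>_. True) k) = 2 ^ tau k - 1"
    using fin by (simp add: card_Pow tau_def)
  moreover have "\<And>m. EE (\<lambda>_. True) m = {S. S \<subseteq> divisors_set m \<and> S \<noteq> {} \<and> gcd (Gcd S) m = 1}"
    unfolding EE_def by simp
  ultimately show ?thesis using decomp[OF k, of "\<lambda>_. True"] unfolding Phi_tau_def by simp
qed

lemma count_r:
  assumes k: "k > 0" and r: "r \<ge> 1"
  shows "tau k choose r = (\<Sum>m\<in>divisors_set k. Phi_tau_r r m)"
proof -
  have fin: "finite (divisors_set k)" using fin_div k .
  have "DD (\<lambda>c. c = r) k = {B. B \<subseteq> divisors_set k \<and> card B = r}" unfolding DD_def using r by auto
  then have "card (DD (\<lambda>c. c = r) k) = tau k choose r"
    using fin by (simp add: n_subsets tau_def)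
  moreover have "\<And>m. EE (\<lambda>c. c = r) m = {S. S \<subseteq> divisors_set m \<and> S \<noteq> {} \<and> gcd (Gcd S) m = 1 \<and> card S = r}"
    unfolding EE_def by simp
  ultimately show ?thesis using decomp[OF k, of "\<lambda>c. c = r"] unfolding Phi_tau_r_def by simp
qed

lemma inner:
  fixes f :: "int \<Rightarrow> int" and m n :: nat
  assumes f0: "\<And>x. x < 0 \<Longrightarrow> f x = 0" and m: "1 \<le> m" "m \<le> n"
  shows "(\<Sum>k=1..n. if m dvd k then f (int n - int k) else 0)
       = (\<Sum>j=0..nat (int n - int m). f (int n - int m - int j * int m))"
proof -
  define h where "h k = (if m dvd k then f (int n - int k) else 0)" for k
  define K where "K = (\<lambda>j. (j+1)*m) ` {0..n-m}"
  have nat_eq: "nat (int n - int m) = n - m" using m by simp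
  have "(\<Sum>j=0..nat (int n - int m). f (int n - int m - int j * int m))
      = (\<Sum>j=0..n-m. h ((j+1)*m))"
    unfolding nat_eq h_def by (rule sum.cong) (auto simp: algebra_simps)
  also have "\<dots> = sum h K" unfolding K_def
    by (rule sum.reindex[symmetric, unfolded comp_def]) (use m in \<open>auto simp: inj_on_def\<close>)
  also have "\<dots> = sum h ({1..n} \<union> K)"
  proof (rule sum.mono_neutral_left)
    show "finite ({1..n} \<union> K)" unfolding K_def by simp
    show "K \<subseteq> {1..n} \<union> K" by blast
    show "\<forall>i\<in>{1..n} \<union> K - K. h i = 0"
    proof
      fix i assume i: "i \<in> {1..n} \<union> K - K"
      show "h i = 0"
      proof (cases "m dvd i")
        case True
        then obtain q where q: "i = m * q" by blast
        have "q \<ge> 1" using i q by (cases q) auto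
        moreover have "m * q \<le> n" using i q by auto
        moreover have "q + m \<le> m * q + 1"
        proof -
          obtain q' where q': "q = Suc q'" using \<open>q \<ge> 1\<close> by (cases q) auto
          obtain m' where m': "m = Suc m'" using m(1) by (cases m) auto
          show ?thesis unfolding q' m' by (simp add: algebra_simps)
        qed
        ultimately have "q - 1 \<in> {0..n-m}" "i = (q - 1 + 1) * m" using q m
          by (auto simp: algebra_simps)
        then have "i \<in> K" unfolding K_def by blast
        then show ?thesis using i by blast
      qed (simp add: h_def)
    qed
  qed
  also have "\<dots> = sum h {1..n}"
  proof (rule sum.mono_neutral_right)
    show "finite ({1..n} \<union> K)" unfolding K_def by simp
    show "{1..n} \<subseteq> {1..n} \<union> K" by blast
    show "\<forall>i\<in>{1..n} \<union> K - {1..n}. h i = 0"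
    proof
      fix i assume i: "i \<in> {1..n} \<union> K - {1..n}"
      then have "i \<ge> 1" unfolding K_def using m by auto
      with i have "i > n" by auto
      then show "h i = 0" unfolding h_def using f0 by simp
    qed
  qed
  finally show ?thesis unfolding h_def by simp
qed



lemma pent_neg: "x < 0 \<Longrightarrow> pent_omega x = 0"
proof -
  assume x: "x < 0"
  have "\<not> (\<exists>j::nat. j \<ge> 1 \<and> (2 * x = 3 * int j ^ 2 + int j \<or> 2 * x = 3 * int j ^ 2 - int j))"
  proof
    assume "\<exists>j::nat. j \<ge> 1 \<and> (2 * x = 3 * int j ^ 2 + int j \<or> 2 * x = 3 * int j ^ 2 - int j)"
    then obtain j :: nat where j: "2 * x = 3 * int j ^ 2 + int j \<or> 2 * x = 3 * int j ^ 2 - int j" by blast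
    have h1: "int j \<le> int j ^ 2" by (cases j) (auto simp: power2_eq_square)
    have h2: "0 \<le> int j ^ 2" by simp
    have h3: "0 \<le> int j" by simp
    from j show False using h1 h2 h3 x by linarith
  qed
  then show ?thesis unfolding pent_omega_def using x by simp
qed

lemma swap:
  fixes F :: "nat \<Rightarrow> int" and f :: "int \<Rightarrow> int" and n :: nat
  assumes f0: "\<And>x. x < 0 \<Longrightarrow> f x = 0"
  shows "(\<Sum>k=1..n. (\<Sum>m\<in>divisors_set k. F m) * f (int n - int k))
       = (\<Sum>m=1..n. F m * (\<Sum>j=0..nat (int n - int m). f (int n - int m - int j * int m)))"
proof -
  have "(\<Sum>k=1..n. (\<Sum>m\<in>divisors_set k. F m) * f (int n - int k))
      = (\<Sum>k=1..n. \<Sum>m=1..n. (if m dvd k then F m * f (int n - int k) else 0))"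
  proof (rule sum.cong[OF refl])
    fix k assume k: "k \<in> {1..n}"
    have "divisors_set k = {m\<in>{1..n}. m dvd k}" using k
      by (auto simp: divisors_set_def dest: dvd_imp_le intro: Nat.gr0I)
    then have "(\<Sum>m\<in>divisors_set k. F m) = (\<Sum>m\<in>{m\<in>{1..n}. m dvd k}. F m)"
      by (simp only:)
    also have "\<dots> = (\<Sum>m=1..n. if m dvd k then F m else 0)"
      by (rule sum.inter_filter) simp
    finally have "(\<Sum>m\<in>divisors_set k. F m) = (\<Sum>m=1..n. if m dvd k then F m else 0)" .
    then show "(\<Sum>m\<in>divisors_set k. F m) * f (int n - int k)
        = (\<Sum>m=1..n. (if m dvd k then F m * f (int n - int k) else 0))"
      by (simp add: sum_distrib_right) (rule sum.cong, auto)
  qed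
  also have "\<dots> = (\<Sum>m=1..n. \<Sum>k=1..n. (if m dvd k then F m * f (int n - int k) else 0))"
    by (rule sum.swap)
  also have "\<dots> = (\<Sum>m=1..n. F m * (\<Sum>k=1..n. if m dvd k then f (int n - int k) else 0))"
    by (simp add: sum_distrib_left if_distrib cong: if_cong)
  also have "\<dots> = (\<Sum>m=1..n. F m * (\<Sum>j=0..nat (int n - int m). f (int n - int m - int j * int m)))"
  proof (rule sum.cong[OF refl])
    fix m assume "m \<in> {1..n}"
    then have m: "1 \<le> m" "m \<le> n" by auto
    show "F m * (\<Sum>k=1..n. if m dvd k then f (int n - int k) else 0)
        = F m * (\<Sum>j=0..nat (int n - int m). f (int n - int m - int j * int m))"
      using inner[of f m n, OF f0 m] by simp
  qed
  finally show ?thesis .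
qed

theorem mainTheorem15:
  fixes n r :: nat
  assumes "n \<ge> 1" and "r \<ge> 1"
  shows "(\<Sum>k = 1..n. ((2::int) ^ tau k - 1) * pent_omega (int n - int k))
           = (\<Sum>m = 1..n. int (Phi_tau m) * Omega m (int n - int m))
       \<and> (\<Sum>k = 1..n. int (tau k choose r) * pent_omega (int n - int k))
           = (\<Sum>m = 1..n. int (Phi_tau_r r m) * Omega m (int n - int m))"
proof
  have "(\<Sum>k = 1..n. ((2::int) ^ tau k - 1) * pent_omega (int n - int k))
      = (\<Sum>k = 1..n. (\<Sum>m\<in>divisors_set k. int (Phi_tau m)) * pent_omega (int n - int k))"
  proof (rule sum.cong[OF refl])
    fix k assume "k \<in> {1..n}"
    then have k: "k > 0" by simp
    have "(2::int) ^ tau k - 1 = int (2 ^ tau k - 1)"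
      by (simp add: of_nat_diff)
    also have "\<dots> = (\<Sum>m\<in>divisors_set k. int (Phi_tau m))"
      using count_all[OF k] by simp
    finally show "((2::int) ^ tau k - 1) * pent_omega (int n - int k)
      = (\<Sum>m\<in>divisors_set k. int (Phi_tau m)) * pent_omega (int n - int k)" by simp
  qed
  also have "\<dots> = (\<Sum>m = 1..n. int (Phi_tau m) * Omega m (int n - int m))"
    unfolding Omega_def by (rule swap) (rule pent_neg)
  finally show "(\<Sum>k = 1..n. ((2::int) ^ tau k - 1) * pent_omega (int n - int k))
           = (\<Sum>m = 1..n. int (Phi_tau m) * Omega m (int n - int m))" .
next
  have "(\<Sum>k = 1..n. int (tau k choose r) * pent_omega (int n - int k))
      = (\<Sum>k = 1..n. (\<Sum>m\<in>divisors_set k. int (Phi_tau_r r m)) * pent_omega (int n - int k))"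
  proof (rule sum.cong[OF refl])
    fix k assume "k \<in> {1..n}"
    then have k: "k > 0" by simp
    show "int (tau k choose r) * pent_omega (int n - int k)
      = (\<Sum>m\<in>divisors_set k. int (Phi_tau_r r m)) * pent_omega (int n - int k)"
      using count_r[OF k assms(2)] by simp
  qed
  also have "\<dots> = (\<Sum>m = 1..n. int (Phi_tau_r r m) * Omega m (int n - int m))"
    unfolding Omega_def by (rule swap) (rule pent_neg)
  finally show "(\<Sum>k = 1..n. int (tau k choose r) * pent_omega (int n - int k))
           = (\<Sum>m = 1..n. int (Phi_tau_r r m) * Omega m (int n - int m))" .
qed

end
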